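(* Fix integers $1\le k\le n$. Then $(k-1)(n-k)$ is the maximal number of alignments of a permutation $\pi\in S_n$ with exactly $k$ weak excedences, and the number of permutations in $S_n$ with exactly $k$ weak excedences and exactly $(k-1)(n-k)$ alignments is the Narayana number $N_{k,n}=\frac1n\binom{n}{k}\binom{n}{k-1}$.
   Context: Place $1,\dots,n$ clockwise on a circle. Distinct $p_1,\dots,p_m$ are in clockwise cyclic order if $(p_2-p_1)\bmod n<\dots<(p_m-p_1)\bmod n$ (residues in $\{0,\dots,n-1\}$). For $\pi\in S_n$ (fixed points regarded as "counterclockwise loops"), an ordered pair $(i,j)$, $i\ne j$, is aligned if $\pi(j)\ne j$, the entries of $(i,\pi(i),\pi(j),j)$ are pairwise distinct except that possibly $i=\pi(i)$, and the distinct entries in this order are in clockwise cyclic order. An alignment is an unordered pair $\{i,j\}$ with $(i,j)$ or $(j,i)$ aligned. A weak excedence of $\pi$ is an $i$ with $\pi(i)\ge i$. *)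

theory Defs
  imports Complex_Main "HOL-Combinatorics.Permutations"
begin

text \<open>Points 1..n on a circle. A list of distinct points is in clockwise cyclic order
if the residues (p_k - p_1) mod n, k = 2..m, are strictly increasing.\<close>
definition cw_order :: "nat \<Rightarrow> nat list \<Rightarrow> bool" where
  "cw_order n ps \<longleftrightarrow> distinct ps \<and>
     sorted_wrt (<) (map (\<lambda>p. (int p - int (hd ps)) mod int n) (tl ps))"

text \<open>Ordered pair (i,j) aligned for pi (fixed points are counterclockwise loops).\<close>
definition aligned :: "nat \<Rightarrow> (nat \<Rightarrow> nat) \<Rightarrow> nat \<Rightarrow> nat \<Rightarrow> bool" where
  "aligned n \<pi> i j \<longleftrightarrow> i \<noteq> j \<and> \<pi> j \<noteq> j \<and>
     distinct [i, \<pi> j, j] \<and> distinct [\<pi> i, \<pi> j, j] \<and>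
     cw_order n (if i = \<pi> i then [i, \<pi> j, j] else [i, \<pi> i, \<pi> j, j])"

definition alignments :: "nat \<Rightarrow> (nat \<Rightarrow> nat) \<Rightarrow> nat set set" where
  "alignments n \<pi> = {{i, j} | i j. i \<in> {1..n} \<and> j \<in> {1..n} \<and>
       (aligned n \<pi> i j \<or> aligned n \<pi> j i)}"

definition num_alignments :: "nat \<Rightarrow> (nat \<Rightarrow> nat) \<Rightarrow> nat" where
  "num_alignments n \<pi> = card (alignments n \<pi>)"

definition weak_excedences :: "nat \<Rightarrow> (nat \<Rightarrow> nat) \<Rightarrow> nat set" where
  "weak_excedences n \<pi> = {i \<in> {1..n}. \<pi> i \<ge> i}"

definition narayana :: "nat \<Rightarrow> nat \<Rightarrow> real" where
  "narayana k n = (1 / real n) * real (n choose k) * real (n choose (k - 1))"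

end

theory Submission
  imports Defs
begin


definition Acond :: "nat \<Rightarrow> nat \<Rightarrow> nat \<Rightarrow> nat \<Rightarrow> bool" where
 "Acond i j p q \<longleftrightarrow> (j \<le> q \<and> q < p) \<or> (q < p \<and> p < i) \<or> (i \<le> p \<and> p < q \<and> q < j) \<or> (p < i \<and> j \<le> q)"

lemma mod_lem: "1 \<le> p \<Longrightarrow> p \<le> n \<Longrightarrow> 1 \<le> h \<Longrightarrow> h \<le> n \<Longrightarrow>
  (int p - int h) mod int n = (if h \<le> p then int p - int h else int p - int h + int n)"
proof (cases "h \<le> p")
  case True
  assume a: "1 \<le> p" "p \<le> n" "1 \<le> h" "h \<le> n"
  then show ?thesis using True by (simp add: mod_pos_pos_trivial)
next
  case False
  assume a: "1 \<le> p" "p \<le> n" "1 \<le> h" "h \<le> n"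
  have "(int p - int h) mod int n = (int p - int h + int n) mod int n" by simp
  also have "\<dots> = int p - int h + int n" using a False by (intro mod_pos_pos_trivial) auto
  finally show ?thesis using False by simp
qed

lemma aligned_lin:
  assumes "1 \<le> i" "i < j" "j \<le> n" "1 \<le> \<pi> i" "\<pi> i \<le> n" "1 \<le> \<pi> j" "\<pi> j \<le> n" "\<pi> i \<noteq> \<pi> j"
  shows "(aligned n \<pi> i j \<or> aligned n \<pi> j i) \<longleftrightarrow> Acond i j (\<pi> i) (\<pi> j)"
  using assms
  unfolding aligned_def cw_order_def Acond_def
  by (auto simp: mod_lem split: if_splits)



definition Fp :: "(nat \<Rightarrow> nat) \<Rightarrow> nat \<Rightarrow> nat \<Rightarrow> int" where
  "Fp \<pi> i j = of_bool (i < j \<and> Acond i j (\<pi> i) (\<pi> j))"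

definition Alin :: "nat \<Rightarrow> (nat \<Rightarrow> nat) \<Rightarrow> int" where
  "Alin n \<pi> = (\<Sum>i\<in>{1..n}. \<Sum>j\<in>{1..n}. Fp \<pi> i j)"

lemma perm_range: "\<pi> permutes {1..n} \<Longrightarrow> x \<in> {1..n} \<Longrightarrow> \<pi> x \<in> {1..n}"
  by (rule permutes_in_image[THEN iffD2])

lemma num_alignments_Alin:
  assumes p: "\<pi> permutes {1..n}"
  shows "int (num_alignments n \<pi>) = Alin n \<pi>"
proof -
  define R where "R = {(i,j). i \<in> {1..n} \<and> j \<in> {1..n} \<and> i < j \<and> Acond i j (\<pi> i) (\<pi> j)}"
  have inj: "\<pi> i \<noteq> \<pi> j" if "i \<noteq> j" for i j using permutes_inj[OF p] that by (meson injD)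
  have eq: "alignments n \<pi> = (\<lambda>(i,j). {i,j}) ` R"
  proof
    show "alignments n \<pi> \<subseteq> (\<lambda>(i,j). {i,j}) ` R"
    proof
      fix s assume "s \<in> alignments n \<pi>"
      then obtain i j where s: "s = {i,j}" and ij: "i \<in> {1..n}" "j \<in> {1..n}"
        and al: "aligned n \<pi> i j \<or> aligned n \<pi> j i"
        unfolding alignments_def by blast
      have "i \<noteq> j" using al unfolding aligned_def by auto
      then consider "i < j" | "j < i" by linarith
      then show "s \<in> (\<lambda>(i,j). {i,j}) ` R"
      proof cases
        case 1
        have "Acond i j (\<pi> i) (\<pi> j)"
          using aligned_lin[of i j n \<pi>] 1 ij al perm_range[OF p, of i] perm_range[OF p, of j] inj[of i j]
          by auto
        then have "(i,j) \<in> R" unfolding R_def using ij 1 by auto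
        then show ?thesis unfolding s by (rule rev_image_eqI) auto
      next
        case 2
        have "Acond j i (\<pi> j) (\<pi> i)"
          using aligned_lin[of j i n \<pi>] 2 ij al perm_range[OF p, of i] perm_range[OF p, of j] inj[of i j]
          by auto
        then have "(j,i) \<in> R" unfolding R_def using ij 2 by auto
        then show ?thesis unfolding s by (rule rev_image_eqI) auto
      qed
    qed
  next
    show "(\<lambda>(i,j). {i,j}) ` R \<subseteq> alignments n \<pi>"
    proof
      fix s assume "s \<in> (\<lambda>(i,j). {i,j}) ` R"
      then obtain i j where s: "s = {i,j}" and r: "(i,j) \<in> R" by auto
      then have ij: "i \<in> {1..n}" "j \<in> {1..n}" "i < j" "Acond i j (\<pi> i) (\<pi> j)" unfolding R_def by auto
      have "aligned n \<pi> i j \<or> aligned n \<pi> j i"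
        using aligned_lin[of i j n \<pi>] ij perm_range[OF p, of i] perm_range[OF p, of j] inj[of i j]
        by auto
      then show "s \<in> alignments n \<pi>" unfolding alignments_def s using ij by blast
    qed
  qed
  have injR: "inj_on (\<lambda>(i,j). {i,j}) R"
  proof (rule inj_onI)
    fix x y assume "x \<in> R" "y \<in> R" "(\<lambda>(i,j). {i::nat,j}) x = (\<lambda>(i,j). {i,j}) y"
    then show "x = y" unfolding R_def by (auto simp: doubleton_eq_iff)
  qed
  have "num_alignments n \<pi> = card R"
    unfolding num_alignments_def eq using card_image[OF injR] by simp
  also have "int (card R) = (\<Sum>x\<in>{1..n}\<times>{1..n}. of_bool (fst x < snd x \<and> Acond (fst x) (snd x) (\<pi> (fst x)) (\<pi> (snd x))))"
  proof -
    have "R = ({1..n}\<times>{1..n}) \<inter> {x. fst x < snd x \<and> Acond (fst x) (snd x) (\<pi> (fst x)) (\<pi> (snd x))}"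
      unfolding R_def by auto
    then show ?thesis by simp
  qed
  also have "\<dots> = (\<Sum>(i,j)\<in>{1..n}\<times>{1..n}. Fp \<pi> i j)"
    by (intro sum.cong refl) (auto simp: Fp_def split: prod.splits)
  also have "\<dots> = Alin n \<pi>"
    unfolding Alin_def by (rule sum.cartesian_product[symmetric])
  finally show ?thesis .
qed

lemma wk_sum: "int (card (weak_excedences n \<pi>)) = (\<Sum>x\<in>{1..n}. of_bool (x \<le> \<pi> x))"
proof -
  have "weak_excedences n \<pi> = {1..n} \<inter> {x. x \<le> \<pi> x}" unfolding weak_excedences_def by auto
  then show ?thesis by simp
qed



definition Phi :: "nat \<Rightarrow> nat \<Rightarrow> nat \<Rightarrow> nat \<Rightarrow> int" where
  "Phi a b x px = (if a \<le> b then 2 * of_bool (x < a \<and> b < px)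
                   else of_bool (x = a) + 2 * of_bool (a < x \<and> px < b))"

definition tau :: "nat \<Rightarrow> nat \<Rightarrow> nat \<Rightarrow> nat \<Rightarrow> int" where
  "tau a b x px = (if a \<le> b then of_bool (x \<le> px \<and> x \<noteq> a) else of_bool (px < x))"

definition Gx :: "nat \<Rightarrow> nat \<Rightarrow> nat \<Rightarrow> nat \<Rightarrow> nat \<Rightarrow> int" where
  "Gx n a b x px = (let sx = (if x = a then Suc n else px) in
     of_bool (x < Suc n \<and> Acond x (Suc n) sx b)
     + (of_bool (a < x \<and> Acond a x (Suc n) sx) - of_bool (a < x \<and> Acond a x b px))
     + (if x \<noteq> a then of_bool (x < a \<and> Acond x a sx (Suc n)) - of_bool (x < a \<and> Acond x a px b) else 0))"

lemma pointwise:
  assumes "1 \<le> x" "x \<le> n" "1 \<le> px" "px \<le> n" "1 \<le> a" "a \<le> n" "1 \<le> b" "b \<le> n"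
    "x = a \<longrightarrow> px = b" "x \<noteq> a \<longrightarrow> px \<noteq> b"
  shows "tau a b x px - Gx n a b x px = Phi a b x px"
  using assms unfolding tau_def Gx_def Phi_def Acond_def Let_def
  by (auto split: if_splits)



definition Dl :: "nat \<Rightarrow> (nat \<Rightarrow> nat) \<Rightarrow> int" where
  "Dl n \<pi> = (int (card (weak_excedences n \<pi>)) - 1) * (int n - int (card (weak_excedences n \<pi>))) - Alin n \<pi>"

lemma sigma_vals:
  assumes p: "\<pi> permutes {1..n}"
  shows "(\<pi> \<circ> transpose a (Suc n)) x = (if x = a then Suc n else if x = Suc n then \<pi> a else \<pi> x)"
proof -
  have "\<pi> (Suc n) = Suc n" using permutes_not_in[OF p] by auto
  then show ?thesis by (auto simp: transpose_def)
qed

lemma atLeast1_Suc: "{1..Suc n} = insert (Suc n) {1..n}" by auto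

lemma Alin_Suc_split:
  "Alin (Suc n) \<sigma> = (\<Sum>i\<in>{1..n}. \<Sum>j\<in>{1..n}. Fp \<sigma> i j) + (\<Sum>i\<in>{1..n}. Fp \<sigma> i (Suc n))"
proof -
  have z: "(\<Sum>j\<in>{1..Suc n}. Fp \<sigma> (Suc n) j) = 0"
    by (intro sum.neutral) (auto simp: Fp_def)
  have "Alin (Suc n) \<sigma> = (\<Sum>j\<in>{1..Suc n}. Fp \<sigma> (Suc n) j) + (\<Sum>i\<in>{1..n}. \<Sum>j\<in>{1..Suc n}. Fp \<sigma> i j)"
    unfolding Alin_def by (subst (1) atLeast1_Suc) (simp add: sum.insert)
  also have "\<dots> = (\<Sum>i\<in>{1..n}. Fp \<sigma> i (Suc n) + (\<Sum>j\<in>{1..n}. Fp \<sigma> i j))"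
    using z by (subst atLeast1_Suc) (simp add: sum.insert)
  finally show ?thesis by (simp add: sum.distrib)
qed

lemma double_sum_change:
  fixes f g :: "nat \<Rightarrow> nat \<Rightarrow> int"
  assumes a: "a \<in> A" and fin: "finite A"
    and same: "\<And>i j. i \<in> A \<Longrightarrow> j \<in> A \<Longrightarrow> i \<noteq> a \<Longrightarrow> j \<noteq> a \<Longrightarrow> f i j = g i j"
  shows "(\<Sum>i\<in>A. \<Sum>j\<in>A. f i j) = (\<Sum>i\<in>A. \<Sum>j\<in>A. g i j)
          + (\<Sum>x\<in>A. f a x - g a x) + (\<Sum>x\<in>A. if x \<noteq> a then f x a - g x a else 0)"
proof -
  have pw: "f i j = g i j + (if i = a then f a j - g a j else 0)
                 + (if j = a then (if i \<noteq> a then f i a - g i a else 0) else 0)"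
    if "i \<in> A" "j \<in> A" for i j
    using same[OF that] by auto
  have "(\<Sum>i\<in>A. \<Sum>j\<in>A. f i j) = (\<Sum>i\<in>A. \<Sum>j\<in>A. g i j + (if i = a then f a j - g a j else 0)
                 + (if j = a then (if i \<noteq> a then f i a - g i a else 0) else 0))"
    using pw by (intro sum.cong refl) auto
  also have "\<dots> = (\<Sum>i\<in>A. \<Sum>j\<in>A. g i j) + (\<Sum>i\<in>A. \<Sum>j\<in>A. (if i = a then f a j - g a j else 0))
                 + (\<Sum>i\<in>A. \<Sum>j\<in>A. (if j = a then (if i \<noteq> a then f i a - g i a else 0) else 0))"
    by (simp add: sum.distrib)
  also have "(\<Sum>i\<in>A. \<Sum>j\<in>A. (if i = a then f a j - g a j else 0)) = (\<Sum>x\<in>A. f a x - g a x)"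
  proof -
    have "(\<Sum>i\<in>A. \<Sum>j\<in>A. (if i = a then f a j - g a j else 0)) = (\<Sum>i\<in>A. if i = a then (\<Sum>j\<in>A. f a j - g a j) else 0)"
      by (intro sum.cong refl) auto
    also have "\<dots> = (\<Sum>x\<in>A. f a x - g a x)" using a fin by (simp add: sum.delta')
    finally show ?thesis .
  qed
  also have "(\<Sum>i\<in>A. \<Sum>j\<in>A. (if j = a then (if i \<noteq> a then f i a - g i a else 0) else 0))
           = (\<Sum>x\<in>A. if x \<noteq> a then f x a - g x a else 0)"
    using a fin by (intro sum.cong refl) (simp add: sum.delta')
  finally show ?thesis .
qed

lemma KL:
  assumes p: "\<pi> permutes {1..n}" and a: "a \<in> {1..n}"
  shows "Dl (Suc n) (\<pi> \<circ> transpose a (Suc n)) = Dl n \<pi> + (\<Sum>x\<in>{1..n}. Phi a (\<pi> a) x (\<pi> x))"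
proof -
  define \<sigma> where "\<sigma> = \<pi> \<circ> transpose a (Suc n)"
  define b where "b = \<pi> a"
  have sv: "\<sigma> x = (if x = a then Suc n else if x = Suc n then b else \<pi> x)" for x
    unfolding \<sigma>_def b_def by (rule sigma_vals[OF p])
  have rng: "x \<in> {1..n} \<Longrightarrow> \<pi> x \<in> {1..n}" for x by (rule perm_range[OF p])
  have injp: "x \<noteq> y \<Longrightarrow> \<pi> x \<noteq> \<pi> y" for x y using permutes_inj[OF p] by (meson injD)
  have b: "b \<in> {1..n}" unfolding b_def using rng a by auto
  define K where "K = (\<Sum>x\<in>{1..n}. of_bool (x \<le> \<pi> x) :: int)"
  define S where "S = (\<Sum>x\<in>{1..n}. Gx n a b x (\<pi> x))"
  have A1: "(\<Sum>i\<in>{1..n}. \<Sum>j\<in>{1..n}. Fp \<sigma> i j) = Alin n \<pi>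
          + (\<Sum>x\<in>{1..n}. Fp \<sigma> a x - Fp \<pi> a x) + (\<Sum>x\<in>{1..n}. if x \<noteq> a then Fp \<sigma> x a - Fp \<pi> x a else 0)"
    unfolding Alin_def
    by (rule double_sum_change[OF a]) (auto simp: Fp_def sv)
  have Alin': "Alin (Suc n) \<sigma> = Alin n \<pi> + S"
  proof -
    have "Alin (Suc n) \<sigma> = Alin n \<pi> + ((\<Sum>x\<in>{1..n}. Fp \<sigma> x (Suc n)) + (\<Sum>x\<in>{1..n}. Fp \<sigma> a x - Fp \<pi> a x) + (\<Sum>x\<in>{1..n}. if x \<noteq> a then Fp \<sigma> x a - Fp \<pi> x a else 0))"
      using Alin_Suc_split[of n \<sigma>] A1 by simp
    also have "\<dots> = Alin n \<pi> + S"
      unfolding S_def sum.distrib[symmetric]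
      using a by (intro arg_cong2[where f="(+)"] refl sum.cong) (auto simp: Fp_def Gx_def Let_def sv b_def)
    finally show ?thesis .
  qed
  have K: "int (card (weak_excedences n \<pi>)) = K" unfolding K_def by (rule wk_sum)
  have K': "int (card (weak_excedences (Suc n) \<sigma>)) = K + of_bool (b < a)"
  proof -
    have "int (card (weak_excedences (Suc n) \<sigma>)) = (\<Sum>x\<in>insert (Suc n) {1..n}. of_bool (x \<le> \<sigma> x))"
      using wk_sum atLeast1_Suc by metis
    also have "\<dots> = (\<Sum>x\<in>{1..n}. of_bool (x \<le> \<sigma> x))"
      using a b by (simp add: sum.insert sv del: sum_of_bool_eq)
    also have "\<dots> = (\<Sum>x\<in>{1..n}. of_bool (x \<le> \<pi> x) + (if x = a then of_bool (b < a) else 0))"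
      using a b by (intro sum.cong refl) (auto simp: sv b_def)
    also have "\<dots> = K + of_bool (b < a)"
      unfolding K_def sum.distrib using a by (simp add: sum.delta')
    finally show ?thesis .
  qed
  have tsum: "(\<Sum>x\<in>{1..n}. tau a b x (\<pi> x)) =
     (K + of_bool (b < a) - 1) * (int (Suc n) - (K + of_bool (b < a))) - (K - 1) * (int n - K)"
  proof (cases "a \<le> b")
    case True
    have "K = (\<Sum>x\<in>{1..n}. tau a b x (\<pi> x) + (if x = a then 1 else 0))"
      unfolding K_def using True a by (intro sum.cong refl) (auto simp: tau_def b_def)
    also have "\<dots> = (\<Sum>x\<in>{1..n}. tau a b x (\<pi> x)) + 1"
      using a by (simp add: sum.distrib sum.delta')
    finally show ?thesis using True by (simp add: algebra_simps)
  next
    case False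
    have "(\<Sum>x\<in>{1..n}. tau a b x (\<pi> x)) = (\<Sum>x\<in>{1..n}. 1 - of_bool (x \<le> \<pi> x))"
      using False by (intro sum.cong refl) (auto simp: tau_def)
    also have "\<dots> = int n - K" unfolding K_def by (simp add: sum_subtractf)
    finally show ?thesis using False by (simp add: algebra_simps)
  qed
  have "Dl (Suc n) \<sigma> - Dl n \<pi> = (\<Sum>x\<in>{1..n}. tau a b x (\<pi> x)) - S"
    unfolding Dl_def K K' Alin' tsum by (simp add: algebra_simps)
  also have "\<dots> = (\<Sum>x\<in>{1..n}. tau a b x (\<pi> x) - Gx n a b x (\<pi> x))"
    unfolding S_def by (simp add: sum_subtractf)
  also have "\<dots> = (\<Sum>x\<in>{1..n}. Phi a b x (\<pi> x))"
  proof (intro sum.cong refl)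
    fix x assume x: "x \<in> {1..n}"
    show "tau a b x (\<pi> x) - Gx n a b x (\<pi> x) = Phi a b x (\<pi> x)"
      using pointwise[of x n "\<pi> x" a b] x rng[OF x] a b injp[of x a] unfolding b_def by auto
  qed
  finally show ?thesis unfolding \<sigma>_def b_def by simp
qed

lemma KL_fix:
  assumes p: "\<pi> permutes {1..n}"
  shows "Dl (Suc n) (\<pi> \<circ> transpose (Suc n) (Suc n)) = Dl n \<pi>"
proof -
  have ps: "\<pi> (Suc n) = Suc n" using permutes_not_in[OF p] by auto
  have rng: "x \<in> {1..n} \<Longrightarrow> \<pi> x \<in> {1..n}" for x by (rule perm_range[OF p])
  define K where "K = (\<Sum>x\<in>{1..n}. of_bool (x \<le> \<pi> x) :: int)"
  have K: "int (card (weak_excedences n \<pi>)) = K" unfolding K_def by (rule wk_sum)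
  have K': "int (card (weak_excedences (Suc n) \<pi>)) = K + 1"
  proof -
    have "int (card (weak_excedences (Suc n) \<pi>)) = (\<Sum>x\<in>insert (Suc n) {1..n}. of_bool (x \<le> \<pi> x))"
      using wk_sum atLeast1_Suc by metis
    also have "\<dots> = K + 1" unfolding K_def using ps by (simp add: sum.insert)
    finally show ?thesis .
  qed
  have "Alin (Suc n) \<pi> = Alin n \<pi> + (\<Sum>i\<in>{1..n}. Fp \<pi> i (Suc n))"
    using Alin_Suc_split[of n \<pi>] unfolding Alin_def by simp
  also have "(\<Sum>i\<in>{1..n}. Fp \<pi> i (Suc n)) = (\<Sum>i\<in>{1..n}. 1 - of_bool (i \<le> \<pi> i))"
    using rng ps by (intro sum.cong refl) (fastforce simp: Fp_def Acond_def)
  also have "\<dots> = int n - K" unfolding K_def by (simp add: sum_subtractf)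
  finally have "Alin (Suc n) \<pi> = Alin n \<pi> + (int n - K)" .
  then have "Dl (Suc n) \<pi> = Dl n \<pi>" unfolding Dl_def K K' by (simp add: algebra_simps)
  moreover have "\<pi> \<circ> transpose (Suc n) (Suc n) = \<pi>" by simp
  ultimately show ?thesis by simp
qed



lemma comp_permutes:
  assumes p: "\<pi> permutes {1..n}" and a: "a \<in> {1..Suc n}"
  shows "\<pi> \<circ> transpose a (Suc n) permutes {1..Suc n}"
proof -
  have "\<pi> permutes {1..Suc n}" by (rule permutes_subset[OF p]) auto
  moreover have "transpose a (Suc n) permutes {1..Suc n}" using a by (intro permutes_swap_id) auto
  ultimately show ?thesis by (rule permutes_compose[rotated])
qed

lemma decomp:
  assumes s: "\<sigma> permutes {1..Suc n}"
  shows "\<exists>\<pi> a. \<pi> permutes {1..n} \<and> a \<in> {1..Suc n} \<and> \<sigma> = \<pi> \<circ> transpose a (Suc n)"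
proof -
  define a where "a = inv \<sigma> (Suc n)"
  have sa: "\<sigma> a = Suc n" unfolding a_def using permutes_inverses[OF s] by simp
  have a: "a \<in> {1..Suc n}"
  proof (rule ccontr)
    assume "a \<notin> {1..Suc n}"
    then have "\<sigma> a = a" using permutes_not_in[OF s] by auto
    then show False using sa \<open>a \<notin> {1..Suc n}\<close> by auto
  qed
  define \<pi> where "\<pi> = \<sigma> \<circ> transpose a (Suc n)"
  have "\<pi> permutes {1..Suc n}" unfolding \<pi>_def
    using a by (intro permutes_compose[rotated] s permutes_swap_id) auto
  then have "\<pi> permutes {1..n}"
  proof (rule permutes_superset)
    fix x assume "x \<in> {1..Suc n} - {1..n}"
    then have "x = Suc n" by auto
    then show "\<pi> x = x" using sa by (simp add: \<pi>_def)
  qed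
  moreover have "\<sigma> = \<pi> \<circ> transpose a (Suc n)" unfolding \<pi>_def by (simp add: comp_assoc)
  ultimately show ?thesis using a by blast
qed

lemma comp_inj:
  assumes p: "\<pi> permutes {1..n}" and p': "\<pi>' permutes {1..n}"
    and a: "a \<in> {1..Suc n}" and a': "a' \<in> {1..Suc n}"
    and eq: "\<pi> \<circ> transpose a (Suc n) = \<pi>' \<circ> transpose a' (Suc n)"
  shows "\<pi> = \<pi>' \<and> a = a'"
proof -
  have f: "\<pi> (Suc n) = Suc n" "\<pi>' (Suc n) = Suc n" using permutes_not_in[OF p] permutes_not_in[OF p'] by auto
  have "(\<pi> \<circ> transpose a (Suc n)) a = Suc n" using f by simp
  then have "\<pi>' (transpose a' (Suc n) a) = Suc n" using eq by simp
  then have "transpose a' (Suc n) a = Suc n"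
    using f permutes_inj[OF p'] by (metis injD)
  then have aa: "a = a'" by (auto simp: transpose_def split: if_splits)
  have "\<pi> \<circ> transpose a (Suc n) \<circ> transpose a (Suc n) = \<pi>' \<circ> transpose a (Suc n) \<circ> transpose a (Suc n)"
    using eq aa by simp
  then have "\<pi> = \<pi>'" by (simp add: comp_assoc)
  then show ?thesis using aa by simp
qed

lemma Dl_zero_base: "\<pi> permutes {1..0} \<Longrightarrow> Dl 0 \<pi> = 0"
  by (simp add: Dl_def Alin_def weak_excedences_def)

lemma Phi_nonneg: "Phi a b x px \<ge> 0" by (simp add: Phi_def)

lemma Dl_nonneg: "\<pi> permutes {1..n} \<Longrightarrow> Dl n \<pi> \<ge> 0"
proof (induction n arbitrary: \<pi>)
  case 0
  have "Dl 0 \<pi> = 0" using Dl_zero_base 0 by blast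
  then show ?case by simp
next
  case (Suc n)
  obtain \<rho> a where r: "\<rho> permutes {1..n}" and a: "a \<in> {1..Suc n}" and eq: "\<pi> = \<rho> \<circ> transpose a (Suc n)"
    using decomp[OF Suc.prems] by blast
  show ?case
  proof (cases "a = Suc n")
    case True
    then show ?thesis using KL_fix[OF r] Suc.IH[OF r] unfolding eq by simp
  next
    case False
    then have a': "a \<in> {1..n}" using a by auto
    have "0 \<le> (\<Sum>x\<in>{1..n}. Phi a (\<rho> a) x (\<rho> x))" by (intro sum_nonneg Phi_nonneg)
    then show ?thesis using KL[OF r a'] Suc.IH[OF r] unfolding eq by linarith
  qed
qed

definition Adm :: "nat \<Rightarrow> (nat \<Rightarrow> nat) \<Rightarrow> nat set" where
  "Adm n \<pi> = {a \<in> {1..n}. a \<le> \<pi> a \<and> (\<forall>x\<in>{1..n}. x < a \<longrightarrow> \<pi> x < \<pi> a)}"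

lemma good_step:
  assumes p: "\<pi> permutes {1..n}" and a: "a \<in> {1..Suc n}"
  shows "Dl (Suc n) (\<pi> \<circ> transpose a (Suc n)) = 0 \<longleftrightarrow> Dl n \<pi> = 0 \<and> (a = Suc n \<or> a \<in> Adm n \<pi>)"
proof (cases "a = Suc n")
  case True
  then show ?thesis using KL_fix[OF p] by simp
next
  case False
  then have a': "a \<in> {1..n}" using a by auto
  have injp: "x \<noteq> y \<Longrightarrow> \<pi> x \<noteq> \<pi> y" for x y using permutes_inj[OF p] by (meson injD)
  have nn: "Dl n \<pi> \<ge> 0" by (rule Dl_nonneg[OF p])
  have sn: "0 \<le> (\<Sum>x\<in>{1..n}. Phi a (\<pi> a) x (\<pi> x))" by (intro sum_nonneg Phi_nonneg)
  have "Dl (Suc n) (\<pi> \<circ> transpose a (Suc n)) = 0 \<longleftrightarrow> Dl n \<pi> = 0 \<and> (\<Sum>x\<in>{1..n}. Phi a (\<pi> a) x (\<pi> x)) = 0"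
    using KL[OF p a'] nn sn by linarith
  also have "(\<Sum>x\<in>{1..n}. Phi a (\<pi> a) x (\<pi> x)) = 0 \<longleftrightarrow> (\<forall>x\<in>{1..n}. Phi a (\<pi> a) x (\<pi> x) = 0)"
    by (intro sum_nonneg_eq_0_iff) (auto simp: Phi_nonneg)
  also have "(\<forall>x\<in>{1..n}. Phi a (\<pi> a) x (\<pi> x) = 0) \<longleftrightarrow> a \<in> Adm n \<pi>"
  proof (cases "a \<le> \<pi> a")
    case True
    have "(\<forall>x\<in>{1..n}. Phi a (\<pi> a) x (\<pi> x) = 0) \<longleftrightarrow> (\<forall>x\<in>{1..n}. x < a \<longrightarrow> \<pi> x \<le> \<pi> a)"
      using True by (auto simp: Phi_def not_less)
    also have "\<dots> \<longleftrightarrow> (\<forall>x\<in>{1..n}. x < a \<longrightarrow> \<pi> x < \<pi> a)"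
    proof -
      have "x < a \<Longrightarrow> \<pi> x \<noteq> \<pi> a" for x using injp[of x a] by auto
      then show ?thesis by (meson le_neq_implies_less less_imp_le_nat)
    qed
    finally show ?thesis using True a' by (auto simp: Adm_def)
  next
    case False
    have "Phi a (\<pi> a) a (\<pi> a) \<noteq> 0" using False by (simp add: Phi_def)
    then show ?thesis using False a' by (auto simp: Adm_def)
  qed
  finally show ?thesis using False by blast
qed

lemma wk_change:
  assumes p: "\<pi> permutes {1..n}" and a: "a \<in> {1..n}"
  shows "card (weak_excedences (Suc n) (\<pi> \<circ> transpose a (Suc n))) = card (weak_excedences n \<pi>) + (if \<pi> a < a then 1 else 0)"
proof -
  define \<sigma> where "\<sigma> = \<pi> \<circ> transpose a (Suc n)"
  have sv: "\<sigma> x = (if x = a then Suc n else if x = Suc n then \<pi> a else \<pi> x)" for x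
    unfolding \<sigma>_def by (rule sigma_vals[OF p])
  have b: "\<pi> a \<in> {1..n}" using perm_range[OF p a] .
  have "int (card (weak_excedences (Suc n) \<sigma>)) = (\<Sum>x\<in>insert (Suc n) {1..n}. of_bool (x \<le> \<sigma> x))"
    using wk_sum atLeast1_Suc by metis
  also have "\<dots> = (\<Sum>x\<in>{1..n}. of_bool (x \<le> \<sigma> x))"
    using a b by (simp add: sum.insert sv del: sum_of_bool_eq)
  also have "\<dots> = (\<Sum>x\<in>{1..n}. of_bool (x \<le> \<pi> x) + (if x = a then of_bool (\<pi> a < a) else 0))"
    using a b by (intro sum.cong refl) (auto simp: sv)
  also have "\<dots> = int (card (weak_excedences n \<pi>)) + of_bool (\<pi> a < a)"
    unfolding wk_sum sum.distrib using a by (simp add: sum.delta' del: sum_of_bool_eq)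
  finally have "int (card (weak_excedences (Suc n) \<sigma>)) = int (card (weak_excedences n \<pi>)) + of_bool (\<pi> a < a)" .
  then show ?thesis unfolding \<sigma>_def by (cases "\<pi> a < a") auto
qed

lemma wk_fix:
  assumes p: "\<pi> permutes {1..n}"
  shows "card (weak_excedences (Suc n) (\<pi> \<circ> transpose (Suc n) (Suc n))) = card (weak_excedences n \<pi>) + 1"
proof -
  have ps: "\<pi> (Suc n) = Suc n" using permutes_not_in[OF p] by auto
  have "int (card (weak_excedences (Suc n) \<pi>)) = (\<Sum>x\<in>insert (Suc n) {1..n}. of_bool (x \<le> \<pi> x))"
    using wk_sum atLeast1_Suc by metis
  also have "\<dots> = int (card (weak_excedences n \<pi>)) + 1" unfolding wk_sum using ps
    by (simp add: sum.insert del: sum_of_bool_eq)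
  finally show ?thesis by simp
qed

lemma Adm_sub: "Adm n \<pi> \<subseteq> {1..n}" by (auto simp: Adm_def)

lemma Adm_change:
  assumes p: "\<pi> permutes {1..n}" and a: "a \<in> {1..n}"
  shows "Adm (Suc n) (\<pi> \<circ> transpose a (Suc n)) = insert a (Adm n \<pi> \<inter> {..<a})"
proof -
  define \<sigma> where "\<sigma> = \<pi> \<circ> transpose a (Suc n)"
  have sv: "\<sigma> x = (if x = a then Suc n else if x = Suc n then \<pi> a else \<pi> x)" for x
    unfolding \<sigma>_def by (rule sigma_vals[OF p])
  have rng: "x \<in> {1..n} \<Longrightarrow> \<pi> x \<in> {1..n}" for x by (rule perm_range[OF p])
  have "w \<in> Adm (Suc n) \<sigma> \<longleftrightarrow> w \<in> insert a (Adm n \<pi> \<inter> {..<a})" for w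
  proof (cases "w < a")
    case True
    have sw: "\<sigma> w = \<pi> w" using True a by (simp add: sv)
    have q: "(\<forall>x\<in>{1..Suc n}. x < w \<longrightarrow> \<sigma> x < \<sigma> w) \<longleftrightarrow> (\<forall>x\<in>{1..n}. x < w \<longrightarrow> \<pi> x < \<pi> w)"
    proof -
      have "x < w \<Longrightarrow> \<sigma> x = \<pi> x" for x using True a by (simp add: sv)
      then show ?thesis using True a sw by auto
    qed
    show ?thesis unfolding Adm_def using True a sw q by auto
  next
    case False
    show ?thesis
    proof (cases "w = a")
      case True
      have "\<forall>x\<in>{1..Suc n}. x < a \<longrightarrow> \<sigma> x < \<sigma> a"
      proof (intro ballI impI)
        fix x assume "x \<in> {1..Suc n}" "x < a"
        then have "x \<in> {1..n}" "x \<noteq> a" using a by auto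
        then show "\<sigma> x < \<sigma> a" using rng[of x] by (auto simp: sv)
      qed
      moreover have "a \<le> \<sigma> a" "a \<in> {1..Suc n}" using a by (auto simp: sv)
      ultimately have "a \<in> Adm (Suc n) \<sigma>" unfolding Adm_def by blast
      then show ?thesis using True by simp
    next
      case False
      then have aw: "a < w" using \<open>\<not> w < a\<close> by simp
      have "w \<notin> Adm (Suc n) \<sigma>"
      proof
        assume w: "w \<in> Adm (Suc n) \<sigma>"
        then have "w \<in> {1..Suc n}" "\<sigma> a < \<sigma> w" using aw a unfolding Adm_def by auto
        moreover have "w \<le> \<sigma> w" using w unfolding Adm_def by auto
        ultimately show False using rng[of w] rng[OF a] aw a by (auto simp: sv split: if_splits)
      qed
      then show ?thesis using aw by auto
    qed
  qed
  then show ?thesis unfolding \<sigma>_def by blast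
qed

lemma Adm_fix:
  assumes p: "\<pi> permutes {1..n}"
  shows "Adm (Suc n) (\<pi> \<circ> transpose (Suc n) (Suc n)) = insert (Suc n) (Adm n \<pi>)"
proof -
  have ps: "\<pi> (Suc n) = Suc n" using permutes_not_in[OF p] by auto
  have rng: "x \<in> {1..n} \<Longrightarrow> \<pi> x \<in> {1..n}" for x by (rule perm_range[OF p])
  have "w \<in> Adm (Suc n) \<pi> \<longleftrightarrow> w \<in> insert (Suc n) (Adm n \<pi>)" for w
  proof (cases "w = Suc n")
    case True
    have "\<forall>x\<in>{1..Suc n}. x < Suc n \<longrightarrow> \<pi> x < \<pi> (Suc n)"
    proof (intro ballI impI)
      fix x assume "x \<in> {1..Suc n}" "x < Suc n"
      then have "x \<in> {1..n}" by auto
      then show "\<pi> x < \<pi> (Suc n)" using rng ps by fastforce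
    qed
    then show ?thesis using True ps unfolding Adm_def by auto
  next
    case False
    have "w \<in> Adm (Suc n) \<pi> \<longleftrightarrow> w \<in> Adm n \<pi>"
    proof (cases "w \<le> n")
      case True
      have "(\<forall>x\<in>{1..Suc n}. x < w \<longrightarrow> \<pi> x < \<pi> w) \<longleftrightarrow> (\<forall>x\<in>{1..n}. x < w \<longrightarrow> \<pi> x < \<pi> w)"
        using True by auto
      then show ?thesis using True unfolding Adm_def by auto
    next
      case False
      then show ?thesis using \<open>w \<noteq> Suc n\<close> unfolding Adm_def by auto
    qed
    then show ?thesis using False by auto
  qed
  then show ?thesis by auto
qed



definition Tc :: "nat \<Rightarrow> nat \<Rightarrow> nat \<Rightarrow> real" where
  "Tc n k v = (if v \<le> k then real v / real n * real (n choose k) * ((real n - real v - 1) gchoose (k - v)) else 0)"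

lemma binom_rel1: "k \<ge> 1 \<Longrightarrow> real k * real (Suc n choose k) = real (Suc n) * real (n choose (k - 1))"
  using times_binomial_minus1_eq[of k "Suc n"] by (metis diff_Suc_1 of_nat_mult zero_less_iff_neq_zero not_one_le_zero)

lemma binom_rel2: "k \<ge> 1 \<Longrightarrow> real k * real (n choose k) = (real n + 1 - real k) * real (n choose (k - 1))"
proof -
  assume k: "k \<ge> 1"
  obtain k' where k': "k = Suc k'" using k by (cases k) auto
  have p: "real (Suc n choose k) = real (n choose k') + real (n choose k)"
    unfolding k' by simp
  have "real k * real (Suc n choose k) = real (Suc n) * real (n choose k')"
    using binom_rel1[OF k] k' by simp
  then have "real k * real (n choose k) = real (Suc n) * real (n choose k') - real k * real (n choose k')"
    using p by (simp add: algebra_simps)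
  then show ?thesis using k' by (simp add: algebra_simps)
qed

lemma gb_rel: "real (Suc r) * (y gchoose Suc r) = (y - real r) * ((y::real) gchoose r)"
  using gbinomial_mult_1[of y r] by (simp add: algebra_simps)

lemma I2:
  assumes n: "n \<ge> 1" and j: "1 \<le> j" "j \<le> n" and k: "k \<ge> 1"
  shows "Tc (Suc n) k j - Tc n (k-1) (j-1) = Tc n k j + (Tc (Suc n) k (Suc j) - Tc n (k-1) j)"
proof -
  consider "k < j" | "k = j" | "j < k" by linarith
  then show ?thesis
  proof cases
    case 1
    then show ?thesis unfolding Tc_def by auto
  next
    case 2
    define X where "X = real (n choose (k - 1))"
    have c1: "real (Suc n choose k) = real (Suc n) * X / real k"
      using binom_rel1[OF k] k unfolding X_def by (simp add: field_simps)
    have c2: "real (n choose k) = (real n + 1 - real k) * X / real k"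
      using binom_rel2[OF k] k unfolding X_def by (simp add: field_simps)
    have t1: "Tc (Suc n) k j = real k / real (Suc n) * real (Suc n choose k)" using 2 unfolding Tc_def by simp
    have t2: "Tc n (k-1) (j-1) = (real k - 1) / real n * X" using 2 k unfolding Tc_def X_def by (simp add: of_nat_diff)
    have t3: "Tc n k j = real k / real n * real (n choose k)" using 2 unfolding Tc_def by simp
    have t4: "Tc (Suc n) k (Suc j) = 0" and t5: "Tc n (k-1) j = 0" using 2 k unfolding Tc_def by auto
    have nz: "real k \<noteq> 0" "real n \<noteq> 0" "real (Suc n) \<noteq> 0" using n k by auto
    show ?thesis unfolding t1 t2 t3 t4 t5 c1 c2 using nz by (simp add: field_simps del: of_nat_Suc)
  next
    case 3
    obtain r where r: "k - j = Suc r" using 3 by (metis Suc_diff_Suc)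
    define X where "X = real (n choose (k - 1))"
    define y where "y = real n - real j - 1"
    define A0 where "A0 = y gchoose r"
    have c1: "real (Suc n choose k) = real (Suc n) * X / real k"
      using binom_rel1[OF k] k unfolding X_def by (simp add: field_simps)
    have c2: "real (n choose k) = (real n + 1 - real k) * X / real k"
      using binom_rel2[OF k] k unfolding X_def by (simp add: field_simps)
    have rr: "real r = real k - real j - 1" using r 3 by linarith
    have A1: "y gchoose Suc r = (real n - real k) * A0 / (real k - real j)"
    proof -
      have e0: "real (Suc r) * (y gchoose Suc r) = (y - real r) * A0" unfolding A0_def by (rule gb_rel)
      have e1: "real (Suc r) = real k - real j" using rr by simp
      have e2: "y - real r = real n - real k" unfolding y_def using rr by simp
      have e: "(real k - real j) * (y gchoose Suc r) = (real n - real k) * A0" using e0 unfolding e1 e2 .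
      have "real k - real j \<noteq> 0" using 3 by simp
      then show ?thesis using e by (simp add: eq_divide_eq mult.commute)
    qed
    have Ay: "(y + 1) gchoose Suc r = A0 + (y gchoose Suc r)" unfolding A0_def by (rule gbinomial_Suc_Suc)
    have t1: "Tc (Suc n) k j = real j / real (Suc n) * real (Suc n choose k) * ((y + 1) gchoose Suc r)"
      using 3 r unfolding Tc_def y_def by (simp add: algebra_simps)
    have t2: "Tc n (k-1) (j-1) = (real j - 1) / real n * X * ((y + 1) gchoose Suc r)"
    proof -
      have "k - 1 - (j - 1) = Suc r" using r j by auto
      moreover have "real n - real (j - 1) - 1 = y + 1" unfolding y_def using j by (simp add: of_nat_diff)
      moreover have "j - 1 \<le> k - 1" using 3 by simp
      ultimately show ?thesis using 3 j unfolding Tc_def X_def by (simp add: of_nat_diff)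
    qed
    have t3: "Tc n k j = real j / real n * real (n choose k) * (y gchoose Suc r)"
      using 3 r unfolding Tc_def y_def by simp
    have t4: "Tc (Suc n) k (Suc j) = (real j + 1) / real (Suc n) * real (Suc n choose k) * A0"
    proof -
      have "k - Suc j = r" using r by auto
      then show ?thesis using 3 unfolding Tc_def A0_def y_def by (simp add: algebra_simps)
    qed
    have t5: "Tc n (k-1) j = real j / real n * X * A0"
    proof -
      have "k - 1 - j = r" "j \<le> k - 1" using r 3 by auto
      then show ?thesis using 3 unfolding Tc_def A0_def y_def X_def by simp
    qed
    have nz: "real k \<noteq> 0" "real n \<noteq> 0" "real (Suc n) \<noteq> 0" "real k - real j \<noteq> 0" using n k 3 by auto
    show ?thesis unfolding t1 t2 t3 t4 t5 Ay A1 c1 c2 using nz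
      by (simp add: divide_simps del: of_nat_Suc) (simp add: algebra_simps)
  qed
qed

lemma SI:
  assumes n: "n \<ge> 1" and k: "k \<ge> 1" and j: "1 \<le> j" "j \<le> Suc n"
  shows "(\<Sum>v\<in>{j..n}. Tc n k v) = Tc (Suc n) k j - Tc n (k-1) (j-1)"
  using j(2) j(1)
proof (induction j rule: inc_induct)
  case base
  have "Tc (Suc n) k (Suc n) = Tc n (k-1) n"
  proof (cases "k = Suc n")
    case True
    then show ?thesis using n unfolding Tc_def by simp
  next
    case False
    show ?thesis
    proof (cases "k < Suc n")
      case True
      then show ?thesis unfolding Tc_def by auto
    next
      case False
      then have h1: "Suc n choose k = 0" and h2: "n choose (k-1) = 0" using \<open>k \<noteq> Suc n\<close> by auto
      show ?thesis unfolding Tc_def h1 h2 by simp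
    qed
  qed
  then show ?case by simp
next
  case (step m)
  have "{m..n} = insert m {Suc m..n}" using step.hyps by auto
  then have "(\<Sum>v\<in>{m..n}. Tc n k v) = Tc n k m + (\<Sum>v\<in>{Suc m..n}. Tc n k v)" by simp
  also have "\<dots> = Tc n k m + (Tc (Suc n) k (Suc m) - Tc n (k-1) m)" using step.IH by simp
  also have "\<dots> = Tc (Suc n) k m - Tc n (k-1) (m-1)"
    using I2[OF n step.prems, of k] k step.hyps by simp
  finally show ?case .
qed

lemma narayana_Tc:
  assumes "1 \<le> k" "k \<le> n"
  shows "Tc (Suc n) k 1 = narayana k n"
proof -
  have n: "n \<ge> 1" using assms by simp
  have g: "(real (Suc n) - real 1 - 1) gchoose (k - 1) = real ((n - 1) choose (k - 1))"
    using n by (simp add: binomial_gbinomial of_nat_diff)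
  have "Tc (Suc n) k 1 = 1 / real (Suc n) * real (Suc n choose k) * real ((n - 1) choose (k - 1))"
    unfolding Tc_def using assms g by simp
  moreover have r1: "real k * real (Suc n choose k) = real (Suc n) * real (n choose (k - 1))"
    by (rule binom_rel1) (use assms in simp)
  moreover have r2: "real k * real (n choose k) = real n * real ((n - 1) choose (k - 1))"
    using times_binomial_minus1_eq[of k n] assms by (metis of_nat_mult not_one_le_zero zero_less_iff_neq_zero)
  ultimately show ?thesis unfolding narayana_def
  proof -
    assume t: "Tc (Suc n) k 1 = 1 / real (Suc n) * real (Suc n choose k) * real ((n - 1) choose (k - 1))"
    have nz: "real k \<noteq> 0" "real n \<noteq> 0" "real (Suc n) \<noteq> 0" using assms by auto
    have a1: "real (Suc n choose k) = real (Suc n) * real (n choose (k - 1)) / real k" using r1 nz by (simp add: field_simps)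
    have a2: "real (n choose k) = real n * real ((n - 1) choose (k - 1)) / real k" using r2 nz by (simp add: field_simps)
    show "Tc (Suc n) k 1 = 1 / real n * real (n choose k) * real (n choose (k - 1))"
      unfolding t a1 a2 using nz by (simp add: field_simps del: of_nat_Suc)
  qed
qed



lemma count_split:
  "card {\<sigma>. \<sigma> permutes {1..Suc n} \<and> Q \<sigma>} =
   (\<Sum>\<pi>\<in>{\<pi>. \<pi> permutes {1..n}}. card {a\<in>{1..Suc n}. Q (\<pi> \<circ> transpose a (Suc n))})"
proof -
  let ?S = "SIGMA \<pi>:{\<pi>. \<pi> permutes {1..n}}. {a\<in>{1..Suc n}. Q (\<pi> \<circ> transpose a (Suc n))}"
  let ?f = "\<lambda>(\<pi>, a). \<pi> \<circ> transpose a (Suc n)"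
  have img: "{\<sigma>. \<sigma> permutes {1..Suc n} \<and> Q \<sigma>} = ?f ` ?S"
  proof
    show "{\<sigma>. \<sigma> permutes {1..Suc n} \<and> Q \<sigma>} \<subseteq> ?f ` ?S"
    proof
      fix \<sigma> assume s: "\<sigma> \<in> {\<sigma>. \<sigma> permutes {1..Suc n} \<and> Q \<sigma>}"
      then obtain \<pi> a where "\<pi> permutes {1..n}" "a \<in> {1..Suc n}" "\<sigma> = \<pi> \<circ> transpose a (Suc n)"
        using decomp by blast
      then show "\<sigma> \<in> ?f ` ?S" using s by (intro rev_image_eqI[of "(\<pi>, a)"]) auto
    qed
  next
    show "?f ` ?S \<subseteq> {\<sigma>. \<sigma> permutes {1..Suc n} \<and> Q \<sigma>}"
      using comp_permutes by auto
  qed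
  have inj: "inj_on ?f ?S"
  proof (rule inj_onI)
    fix x y assume x: "x \<in> ?S" and y: "y \<in> ?S" and e: "?f x = ?f y"
    obtain \<pi> a where xx: "x = (\<pi>, a)" by (cases x)
    obtain \<pi>' a' where yy: "y = (\<pi>', a')" by (cases y)
    show "x = y" using x y e comp_inj[of \<pi> n \<pi>' a a'] unfolding xx yy by auto
  qed
  have "card {\<sigma>. \<sigma> permutes {1..Suc n} \<and> Q \<sigma>} = card ?S"
    unfolding img by (rule card_image[OF inj])
  also have "\<dots> = (\<Sum>\<pi>\<in>{\<pi>. \<pi> permutes {1..n}}. card {a\<in>{1..Suc n}. Q (\<pi> \<circ> transpose a (Suc n))})"
    by (rule card_SigmaI) (auto simp: finite_permutations)
  finally show ?thesis .
qed

lemma rank_card: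
  fixes S :: "nat set"
  assumes fin: "finite S"
  shows "card {a\<in>S. card (S \<inter> {..<a}) = m} = (if m < card S then 1 else 0)"
proof -
  define r where "r a = card (S \<inter> {..<a})" for a
  have mono: "r a < r b" if "a \<in> S" "b \<in> S" "a < b" for a b
  proof -
    have "S \<inter> {..<a} \<subset> S \<inter> {..<b}" using that by auto
    then show ?thesis unfolding r_def by (intro psubset_card_mono) (use fin in auto)
  qed
  have inj: "inj_on r S"
  proof (rule inj_onI)
    fix a b assume "a \<in> S" "b \<in> S" "r a = r b"
    then show "a = b" using mono by (metis less_irrefl linorder_neqE_nat)
  qed
  have sub: "r ` S \<subseteq> {..<card S}"
  proof
    fix y assume "y \<in> r ` S"
    then obtain a where a: "a \<in> S" "y = r a" by auto
    have "S \<inter> {..<a} \<subset> S" using a by auto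
    then have "r a < card S" unfolding r_def using fin by (intro psubset_card_mono) auto
    then show "y \<in> {..<card S}" using a by simp
  qed
  have img: "r ` S = {..<card S}"
    using card_subset_eq[OF _ sub] card_image[OF inj] by simp
  show ?thesis
  proof (cases "m < card S")
    case True
    then obtain a0 where a0: "a0 \<in> S" "r a0 = m" using img by (metis imageE lessThan_iff)
    have "{a\<in>S. r a = m} = {a0}" using a0 inj by (auto dest: inj_onD)
    then show ?thesis using True unfolding r_def by simp
  next
    case False
    have e: "{a\<in>S. card (S \<inter> {..<a}) = m} = {}" using img False unfolding r_def[symmetric] by auto
    show ?thesis unfolding e using False by simp
  qed
qed

lemma fiber:
  assumes p: "\<pi> permutes {1..n}"
  shows "card {a\<in>{1..Suc n}. Dl (Suc n) (\<pi> \<circ> transpose a (Suc n)) = 0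
              \<and> card (weak_excedences (Suc n) (\<pi> \<circ> transpose a (Suc n))) = k
              \<and> card (Adm (Suc n) (\<pi> \<circ> transpose a (Suc n))) = j}
     = (if Dl n \<pi> = 0 \<and> card (weak_excedences n \<pi>) = k \<and> 1 \<le> j \<and> j \<le> card (Adm n \<pi>) then 1 else 0)
       + (if Dl n \<pi> = 0 \<and> card (weak_excedences n \<pi>) + 1 = k \<and> card (Adm n \<pi>) + 1 = j then 1 else 0)"
proof -
  define Q where "Q a \<longleftrightarrow> Dl (Suc n) (\<pi> \<circ> transpose a (Suc n)) = 0
              \<and> card (weak_excedences (Suc n) (\<pi> \<circ> transpose a (Suc n))) = k
              \<and> card (Adm (Suc n) (\<pi> \<circ> transpose a (Suc n))) = j" for a
  define Ad where "Ad = Adm n \<pi>"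
  have finA: "finite Ad" unfolding Ad_def using Adm_sub finite_subset by blast
  have sn: "Suc n \<notin> Ad" unfolding Ad_def using Adm_sub by fastforce
  have split: "{a\<in>{1..Suc n}. Q a} = {a\<in>{1..n}. Q a} \<union> {a\<in>{Suc n}. Q a}" by auto
  have c2: "card {a\<in>{Suc n}. Q a} = (if Dl n \<pi> = 0 \<and> card (weak_excedences n \<pi>) + 1 = k \<and> card (Adm n \<pi>) + 1 = j then 1 else 0)"
  proof -
    have "Q (Suc n) \<longleftrightarrow> Dl n \<pi> = 0 \<and> card (weak_excedences n \<pi>) + 1 = k \<and> card (Adm n \<pi>) + 1 = j"
      unfolding Q_def using good_step[OF p, of "Suc n"] wk_fix[OF p] Adm_fix[OF p] finA sn
      unfolding Ad_def by auto
    moreover have "{a\<in>{Suc n}. Q a} = (if Q (Suc n) then {Suc n} else {})" by auto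
    ultimately show ?thesis by simp
  qed
  have e1: "{a\<in>{1..n}. Q a} = (if Dl n \<pi> = 0 \<and> card (weak_excedences n \<pi>) = k then {a\<in>Ad. card (Ad \<inter> {..<a}) + 1 = j} else {})"
  proof -
    have "Q a \<longleftrightarrow> Dl n \<pi> = 0 \<and> card (weak_excedences n \<pi>) = k \<and> a \<in> Ad \<and> card (Ad \<inter> {..<a}) + 1 = j"
      if a: "a \<in> {1..n}" for a
    proof -
      have a': "a \<in> {1..Suc n}" using a by auto
      have "Q a \<longleftrightarrow> Dl n \<pi> = 0 \<and> a \<in> Ad \<and> card (weak_excedences (Suc n) (\<pi> \<circ> transpose a (Suc n))) = k
              \<and> card (insert a (Ad \<inter> {..<a})) = j"
        unfolding Q_def good_step[OF p a'] Adm_change[OF p a] Ad_def using a by auto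
      moreover have "a \<in> Ad \<Longrightarrow> card (weak_excedences (Suc n) (\<pi> \<circ> transpose a (Suc n))) = card (weak_excedences n \<pi>)"
        using wk_change[OF p a] unfolding Ad_def Adm_def by auto
      moreover have "card (insert a (Ad \<inter> {..<a})) = card (Ad \<inter> {..<a}) + 1"
        using finA by simp
      ultimately show ?thesis by auto
    qed
    moreover have sub: "Ad \<subseteq> {1..n}" unfolding Ad_def by (rule Adm_sub)
    ultimately show ?thesis unfolding Ad_def[symmetric] by auto
  qed
  have c1: "card {a\<in>{1..n}. Q a} = (if Dl n \<pi> = 0 \<and> card (weak_excedences n \<pi>) = k \<and> 1 \<le> j \<and> j \<le> card (Adm n \<pi>) then 1 else 0)"
  proof (cases "Dl n \<pi> = 0 \<and> card (weak_excedences n \<pi>) = k")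
    case True
    show ?thesis
    proof (cases "j = 0")
      case True
      then show ?thesis using e1 by simp
    next
      case False
      have "{a\<in>Ad. card (Ad \<inter> {..<a}) + 1 = j} = {a\<in>Ad. card (Ad \<inter> {..<a}) = j - 1}" using False by auto
      then show ?thesis using e1 True False rank_card[OF finA, of "j - 1"] unfolding Ad_def by auto
    qed
  next
    case False
    then have e: "{a\<in>{1..n}. Q a} = {}" using e1 by (simp only: if_False)
    show ?thesis unfolding e using False by auto
  qed
  have "card {a\<in>{1..Suc n}. Q a} = card {a\<in>{1..n}. Q a} + card {a\<in>{Suc n}. Q a}"
    unfolding split by (rule card_Un_disjoint) auto
  then show ?thesis using c1 c2 unfolding Q_def by simp
qed

definition Tn :: "nat \<Rightarrow> nat \<Rightarrow> nat \<Rightarrow> nat" where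
  "Tn n k v = card {\<pi>. \<pi> permutes {1..n} \<and> Dl n \<pi> = 0 \<and> card (weak_excedences n \<pi>) = k \<and> card (Adm n \<pi>) = v}"

lemma sum_if_card: "finite P \<Longrightarrow> (\<Sum>x\<in>P. if A x then 1 else 0 :: nat) = card {x\<in>P. A x}"
  by (simp add: sum.If_cases Int_def conj_commute)

lemma Tn_rec:
  assumes "k \<ge> 1" "j \<ge> 1"
  shows "Tn (Suc n) k j = card {\<pi>. \<pi> permutes {1..n} \<and> Dl n \<pi> = 0 \<and> card (weak_excedences n \<pi>) = k \<and> j \<le> card (Adm n \<pi>)}
           + Tn n (k-1) (j-1)"
proof -
  let ?P = "{\<pi>. \<pi> permutes {1..n}}"
  have fin: "finite ?P" by (simp add: finite_permutations)
  have "Tn (Suc n) k j = (\<Sum>\<pi>\<in>?P. (if Dl n \<pi> = 0 \<and> card (weak_excedences n \<pi>) = k \<and> 1 \<le> j \<and> j \<le> card (Adm n \<pi>) then 1 else 0)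
       + (if Dl n \<pi> = 0 \<and> card (weak_excedences n \<pi>) + 1 = k \<and> card (Adm n \<pi>) + 1 = j then 1 else 0))"
    unfolding Tn_def count_split by (intro sum.cong refl) (rule fiber; simp)
  also have "\<dots> = card {\<pi>\<in>?P. Dl n \<pi> = 0 \<and> card (weak_excedences n \<pi>) = k \<and> 1 \<le> j \<and> j \<le> card (Adm n \<pi>)}
      + card {\<pi>\<in>?P. Dl n \<pi> = 0 \<and> card (weak_excedences n \<pi>) + 1 = k \<and> card (Adm n \<pi>) + 1 = j}"
    unfolding sum.distrib using fin by (simp only: sum_if_card)
  also have "{\<pi>\<in>?P. Dl n \<pi> = 0 \<and> card (weak_excedences n \<pi>) = k \<and> 1 \<le> j \<and> j \<le> card (Adm n \<pi>)}
      = {\<pi>. \<pi> permutes {1..n} \<and> Dl n \<pi> = 0 \<and> card (weak_excedences n \<pi>) = k \<and> j \<le> card (Adm n \<pi>)}"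
    using assms by auto
  also have "{\<pi>\<in>?P. Dl n \<pi> = 0 \<and> card (weak_excedences n \<pi>) + 1 = k \<and> card (Adm n \<pi>) + 1 = j}
      = {\<pi>. \<pi> permutes {1..n} \<and> Dl n \<pi> = 0 \<and> card (weak_excedences n \<pi>) = k - 1 \<and> card (Adm n \<pi>) = j - 1}"
    using assms by auto
  finally show ?thesis unfolding Tn_def by simp
qed

lemma Tn_sum:
  "card {\<pi>. \<pi> permutes {1..n} \<and> Dl n \<pi> = 0 \<and> card (weak_excedences n \<pi>) = k \<and> j \<le> card (Adm n \<pi>)}
   = (\<Sum>v\<in>{j..n}. Tn n k v)"
proof -
  have le: "card (Adm n \<pi>) \<le> n" for \<pi>
    using card_mono[OF _ Adm_sub, of n \<pi>] by simp
  have eq: "{\<pi>. \<pi> permutes {1..n} \<and> Dl n \<pi> = 0 \<and> card (weak_excedences n \<pi>) = k \<and> j \<le> card (Adm n \<pi>)}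
     = (\<Union>v\<in>{j..n}. {\<pi>. \<pi> permutes {1..n} \<and> Dl n \<pi> = 0 \<and> card (weak_excedences n \<pi>) = k \<and> card (Adm n \<pi>) = v})"
    using le by auto
  show ?thesis unfolding eq Tn_def
    by (rule card_UN_disjoint) (auto simp: finite_permutations)
qed

lemma one_in_wk: "\<sigma> permutes {1..Suc n} \<Longrightarrow> card (weak_excedences (Suc n) \<sigma>) \<noteq> 0"
proof -
  assume s: "\<sigma> permutes {1..Suc n}"
  have "\<sigma> 1 \<in> {1..Suc n}" using perm_range[OF s, of 1] by simp
  then have "1 \<in> weak_excedences (Suc n) \<sigma>" unfolding weak_excedences_def by auto
  moreover have "finite (weak_excedences (Suc n) \<sigma>)" unfolding weak_excedences_def by auto
  ultimately show ?thesis by auto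
qed

lemma one_in_Adm: "\<sigma> permutes {1..Suc n} \<Longrightarrow> card (Adm (Suc n) \<sigma>) \<noteq> 0"
proof -
  assume s: "\<sigma> permutes {1..Suc n}"
  have "\<sigma> 1 \<in> {1..Suc n}" using perm_range[OF s, of 1] by simp
  then have "1 \<in> Adm (Suc n) \<sigma>" unfolding Adm_def by auto
  moreover have "finite (Adm (Suc n) \<sigma>)" using Adm_sub finite_subset by blast
  ultimately show ?thesis by auto
qed

lemma Tn_k0: "Tn (Suc n) 0 j = 0"
proof -
  have "{\<pi>. \<pi> permutes {1..Suc n} \<and> Dl (Suc n) \<pi> = 0 \<and> card (weak_excedences (Suc n) \<pi>) = 0 \<and> card (Adm (Suc n) \<pi>) = j} = {}"
    using one_in_wk by blast
  then show ?thesis unfolding Tn_def by (simp only: card.empty)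
qed

lemma Tn_j0: "Tn (Suc n) k 0 = 0"
proof -
  have "{\<pi>. \<pi> permutes {1..Suc n} \<and> Dl (Suc n) \<pi> = 0 \<and> card (weak_excedences (Suc n) \<pi>) = k \<and> card (Adm (Suc n) \<pi>) = 0} = {}"
    using one_in_Adm by blast
  then show ?thesis unfolding Tn_def by (simp only: card.empty)
qed

lemma Tn_0: "Tn 0 k v = (if k = 0 \<and> v = 0 then 1 else 0)"
proof -
  have "{\<pi>. \<pi> permutes {1..0::nat}} = {id}" by auto
  moreover have "Dl 0 id = 0" by (rule Dl_zero_base) simp
  moreover have "weak_excedences 0 id = {}" "Adm 0 id = {}" unfolding weak_excedences_def Adm_def by auto
  ultimately have "{\<pi>. \<pi> permutes {1..0} \<and> Dl 0 \<pi> = 0 \<and> card (weak_excedences 0 \<pi>) = k \<and> card (Adm 0 \<pi>) = v}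
     = (if k = 0 \<and> v = 0 then {id} else {})" by auto
  then show ?thesis unfolding Tn_def by simp
qed

lemma Tn_closed: "real (Tn n k v) = (if n = 0 then (if k = 0 \<and> v = 0 then 1 else 0) else Tc n k v)"
proof (induction n arbitrary: k v)
  case 0
  then show ?case by (simp add: Tn_0)
next
  case (Suc n)
  show ?case
  proof (cases "k = 0 \<or> v = 0")
    case True
    then show ?thesis using Tn_k0 Tn_j0 by (auto simp: Tc_def)
  next
    case False
    then have k: "k \<ge> 1" and v: "v \<ge> 1" by auto
    have "real (Tn (Suc n) k v) = (\<Sum>w\<in>{v..n}. real (Tn n k w)) + real (Tn n (k-1) (v-1))"
      unfolding Tn_rec[OF k v] Tn_sum by simp
    also have "\<dots> = Tc (Suc n) k v"
    proof (cases "n = 0")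
      case True
      then show ?thesis using k v Suc.IH by (auto simp: Tc_def)
    next
      case False
      then have n: "n \<ge> 1" by simp
      have "(\<Sum>w\<in>{v..n}. real (Tn n k w)) + real (Tn n (k-1) (v-1)) = (\<Sum>w\<in>{v..n}. Tc n k w) + Tc n (k-1) (v-1)"
        using Suc.IH False by simp
      also have "\<dots> = Tc (Suc n) k v"
      proof (cases "v \<le> Suc n")
        case True
        then show ?thesis using SI[OF n k v True] by simp
      next
        case False
        have e: "{v..n} = {}" using False by auto
        show ?thesis
        proof (cases "v \<le> k")
          case True
          then have h1: "Suc n choose k = 0" and h2: "n choose (k - 1) = 0" using False by auto
          have "Tc n (k-1) (v-1) = 0" unfolding Tc_def h2 by simp
          moreover have "Tc (Suc n) k v = 0" unfolding Tc_def h1 by simp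
          ultimately show ?thesis unfolding e by simp
        next
          case False
          then have "\<not> v - 1 \<le> k - 1" using v k by auto
          then show ?thesis unfolding e Tc_def using False by simp
        qed
      qed
      finally show ?thesis .
    qed
    finally show ?thesis by simp
  qed
qed



theorem mainTheorem14:
  fixes k n :: nat
  assumes "1 \<le> k" and "k \<le> n"
  shows "(\<forall>\<pi>. \<pi> permutes {1..n} \<and> card (weak_excedences n \<pi>) = k
            \<longrightarrow> num_alignments n \<pi> \<le> (k - 1) * (n - k))
       \<and> (\<exists>\<pi>. \<pi> permutes {1..n} \<and> card (weak_excedences n \<pi>) = k
            \<and> num_alignments n \<pi> = (k - 1) * (n - k))
       \<and> real (card {\<pi>. \<pi> permutes {1..n} \<and> card (weak_excedences n \<pi>) = k
            \<and> num_alignments n \<pi> = (k - 1) * (n - k)}) = narayana k n"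
proof -
  have n: "n \<ge> 1" using assms by simp
  have tgt: "int ((k - 1) * (n - k)) = (int k - 1) * (int n - int k)"
    using assms by (simp add: of_nat_diff)
  have dl: "Dl n \<pi> = int ((k - 1) * (n - k)) - int (num_alignments n \<pi>)"
    if "\<pi> permutes {1..n}" "card (weak_excedences n \<pi>) = k" for \<pi>
    unfolding Dl_def tgt num_alignments_Alin[OF that(1)] that(2) by simp
  have P1: "\<forall>\<pi>. \<pi> permutes {1..n} \<and> card (weak_excedences n \<pi>) = k
            \<longrightarrow> num_alignments n \<pi> \<le> (k - 1) * (n - k)"
  proof (intro allI impI)
    fix \<pi> assume h: "\<pi> permutes {1..n} \<and> card (weak_excedences n \<pi>) = k"
    have "Dl n \<pi> \<ge> 0" using Dl_nonneg h by blast
    then have "int (num_alignments n \<pi>) \<le> int ((k - 1) * (n - k))" using dl[of \<pi>] h by linarith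
    then show "num_alignments n \<pi> \<le> (k - 1) * (n - k)" by (simp only: of_nat_le_iff)
  qed
  have seteq: "{\<pi>. \<pi> permutes {1..n} \<and> card (weak_excedences n \<pi>) = k \<and> num_alignments n \<pi> = (k - 1) * (n - k)}
      = {\<pi>. \<pi> permutes {1..n} \<and> Dl n \<pi> = 0 \<and> card (weak_excedences n \<pi>) = k \<and> 0 \<le> card (Adm n \<pi>)}"
  proof -
    have "num_alignments n \<pi> = (k - 1) * (n - k) \<longleftrightarrow> Dl n \<pi> = 0"
      if "\<pi> permutes {1..n}" "card (weak_excedences n \<pi>) = k" for \<pi>
      using dl[OF that] by linarith
    then show ?thesis by blast
  qed
  have "real (card {\<pi>. \<pi> permutes {1..n} \<and> card (weak_excedences n \<pi>) = k \<and> num_alignments n \<pi> = (k - 1) * (n - k)})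
      = (\<Sum>v\<in>{0..n}. real (Tn n k v))"
    unfolding seteq Tn_sum by simp
  also have "\<dots> = (\<Sum>v\<in>{0..n}. Tc n k v)" using n by (simp add: Tn_closed)
  also have "\<dots> = Tc n k 0 + (\<Sum>v\<in>{1..n}. Tc n k v)"
  proof -
    have "{0..n} = insert 0 {1..n}" by auto
    then show ?thesis by simp
  qed
  also have "\<dots> = Tc (Suc n) k 1 - Tc n (k-1) 0"
    using SI[OF n assms(1), of 1] by (simp add: Tc_def)
  also have "\<dots> = narayana k n" using narayana_Tc[OF assms] by (simp add: Tc_def)
  finally have P3: "real (card {\<pi>. \<pi> permutes {1..n} \<and> card (weak_excedences n \<pi>) = k \<and> num_alignments n \<pi> = (k - 1) * (n - k)}) = narayana k n" .
  have pos: "narayana k n > 0"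
    unfolding narayana_def using assms by auto
  have P2: "\<exists>\<pi>. \<pi> permutes {1..n} \<and> card (weak_excedences n \<pi>) = k
            \<and> num_alignments n \<pi> = (k - 1) * (n - k)"
  proof (rule ccontr)
    assume "\<not> ?thesis"
    then have e: "{\<pi>. \<pi> permutes {1..n} \<and> card (weak_excedences n \<pi>) = k \<and> num_alignments n \<pi> = (k - 1) * (n - k)} = {}"
      by blast
    show False using P3 pos unfolding e by simp
  qed
  show ?thesis using P1 P2 P3 by blast
qed

end
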